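(* Let $G=(X,\Sigma,\longrightarrow,X_0)$ and $R=(Z,\Sigma,\longrightarrow,Z_0)$ be automata. (1) $\mathit{SPR}(G,R)\neq\emptyset$ iff there exists $W_0\in E^{\uparrow}_{(G,R)}$ such that $\forall x_0\in X_0\,\exists z_0\in Z_0\,((x_0,z_0)\in W_0)$. (2) If $\mathit{SPR}(G,R)\neq\emptyset$, then $E^{\uparrow}_{(G,R)}=\bigcup_{W\in E^{\uparrow}_{(G,R)}}\wp(W)$.
   Context: An automaton is a 4-tuple $A=(Q,\Sigma,\longrightarrow,Q_0)$ with state set $Q$, finite event set $\Sigma$, ${\longrightarrow}\subseteq Q\times\Sigma\times Q$ and $\emptyset\neq Q_0\subseteq Q$. Write $q\xrightarrow{\sigma}q'$ for $(q,\sigma,q')\in{\longrightarrow}$, $q\xrightarrow{\sigma}$ if some such $q'$ exists; extend to strings. A state is reachable if reached from an initial state by some string. Events are partitioned into uncontrollable $\Sigma_{uc}$ and controllable $\Sigma_c$; $\Sigma_r\subseteq\Sigma$ is a fixed set of required events. For a supervisor $S=(Y,\Sigma,\longrightarrow,Y_0)$, $S\|G=(Y\times X,\Sigma,\longrightarrow,Y_0\times X_0)$ with $(y,x)\xrightarrow{\sigma}(y',x')$ iff $y\xrightarrow{\sigma}y'$ and $x\xrightarrow{\sigma}x'$; $S$ is $\Sigma_{uc}$-admissible w.r.t. $G$ if for every reachable $(y,x)$ of $S\|G$ and $\sigma\in\Sigma_{uc}$, $x\xrightarrow{\sigma}$ implies $(y,x)\xrightarrow{\sigma}$. For automata $A_1,A_2$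 (state sets $Q_1,Q_2$, initial sets $Q_{01},Q_{02}$), $\Phi\subseteq Q_1\times Q_2$ is a cc-simulation if (initial state) every $q_0\in Q_{01}$ has $p_0\in Q_{02}$ with $(q_0,p_0)\in\Phi$; (forward) for $(q,p)\in\Phi$, $\sigma\in\Sigma$, $q\xrightarrow{\sigma}q'$ there is $p'$ with $p\xrightarrow{\sigma}p'$, $(q',p')\in\Phi$; ($\Sigma_r$-backward) for $(q,p)\in\Phi$, $\sigma\in\Sigma_r$, $p\xrightarrow{\sigma}p'$ there is $q'$ with $q\xrightarrow{\sigma}q'$, $(q',p')\in\Phi$. $A_1\sqsubseteq_{cc}A_2$ means one exists. $\mathit{SPR}(G,R)$ is the set of $\Sigma_{uc}$-admissible supervisors $S$ with $S\|G\sqsubseteq_{cc}R$. For $W,W'\subseteq X\times Z$: $\mathit{match}_{G,R}(W,\sigma,W')$ iff for all $(x,z)\in W$ and $x\xrightarrow{\sigma}x'$ there is $z'$ with $z\xrightarrow{\sigma}z'$ and $(x',z')\in W'$. $F_{(G,R)}:\wp(\wp(X\times Z))\to\wp(\wp(X\times Z))$ is defined by: $W\in F_{(G,R)}(E)$ iff $W\in E$ and (1) for every $\sigma\in\Sigma_{uc}$ there is $W'\in E$ with $\mathit{match}_{G,R}(W,\sigma,W')$, and (2) for every $(x,z)\in W$, $\sigma\in\Sigma_r$, $z'$ with $z\xrightarrow{\sigma}z'$ there exist $x'\in X$, $W'\in E$ with $x\xrightarrow{\sigma}x'$, $(x',z')\in W'$ and $\mathit{match}_{G,R}(W,\sigma,W')$.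 $F_{(G,R)}$ is monotone w.r.t. $\subseteq$, and $E^{\uparrow}_{(G,R)}$ denotes its greatest fixpoint. *)

theory Defs
  imports Main
begin

text \<open>The state set Q is the whole type 'q; the event set Sigma is the
  whole (finite) type 'e.  Nonemptiness of the initial set is imposed separately.\<close>

record ('q, 'e) automaton =
  trans :: "('q \<times> 'e \<times> 'q) set"
  init :: "'q set"

inductive reachable :: "('q, 'e) automaton \<Rightarrow> 'q \<Rightarrow> bool" for A where
  init_reach: "q \<in> init A \<Longrightarrow> reachable A q"
| step_reach: "reachable A q \<Longrightarrow> (q, \<sigma>, q') \<in> trans A \<Longrightarrow> reachable A q'"

definition sync :: "('y, 'e) automaton \<Rightarrow> ('x, 'e) automaton \<Rightarrow> ('y \<times> 'x, 'e) automaton" where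
  "sync S G = \<lparr> trans = {((y, x), \<sigma>, (y', x')) | y x \<sigma> y' x'.
                          (y, \<sigma>, y') \<in> trans S \<and> (x, \<sigma>, x') \<in> trans G},
               init = init S \<times> init G \<rparr>"

definition admissible :: "'e set \<Rightarrow> ('y, 'e) automaton \<Rightarrow> ('x, 'e) automaton \<Rightarrow> bool" where
  "admissible Euc S G \<longleftrightarrow>
     (\<forall>y x. reachable (sync S G) (y, x) \<longrightarrow>
        (\<forall>\<sigma>\<in>Euc. (\<exists>x'. (x, \<sigma>, x') \<in> trans G) \<longrightarrow> (\<exists>p'. ((y, x), \<sigma>, p') \<in> trans (sync S G))))"

definition cc_simulation :: "'e set \<Rightarrow> ('q, 'e) automaton \<Rightarrow> ('p, 'e) automaton \<Rightarrow> ('q \<times> 'p) set \<Rightarrow> bool" where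
  "cc_simulation Er A1 A2 \<Phi> \<longleftrightarrow>
     (\<forall>q0\<in>init A1. \<exists>p0\<in>init A2. (q0, p0) \<in> \<Phi>) \<and>
     (\<forall>q p \<sigma> q'. (q, p) \<in> \<Phi> \<longrightarrow> (q, \<sigma>, q') \<in> trans A1 \<longrightarrow>
         (\<exists>p'. (p, \<sigma>, p') \<in> trans A2 \<and> (q', p') \<in> \<Phi>)) \<and>
     (\<forall>q p \<sigma> p'. (q, p) \<in> \<Phi> \<longrightarrow> \<sigma> \<in> Er \<longrightarrow> (p, \<sigma>, p') \<in> trans A2 \<longrightarrow>
         (\<exists>q'. (q, \<sigma>, q') \<in> trans A1 \<and> (q', p') \<in> \<Phi>))"

definition cc_le :: "'e set \<Rightarrow> ('q, 'e) automaton \<Rightarrow> ('p, 'e) automaton \<Rightarrow> bool" where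
  "cc_le Er A1 A2 \<longleftrightarrow> (\<exists>\<Phi>. cc_simulation Er A1 A2 \<Phi>)"

definition SPR :: "'e set \<Rightarrow> 'e set \<Rightarrow> ('x, 'e) automaton \<Rightarrow> ('z, 'e) automaton \<Rightarrow> ('y, 'e) automaton set" where
  "SPR Euc Er G R = {S. init S \<noteq> {} \<and> admissible Euc S G \<and> cc_le Er (sync S G) R}"

definition match :: "('x, 'e) automaton \<Rightarrow> ('z, 'e) automaton \<Rightarrow> ('x \<times> 'z) set \<Rightarrow> 'e \<Rightarrow> ('x \<times> 'z) set \<Rightarrow> bool" where
  "match G R W \<sigma> W' \<longleftrightarrow>
     (\<forall>x z x'. (x, z) \<in> W \<longrightarrow> (x, \<sigma>, x') \<in> trans G \<longrightarrow> (\<exists>z'. (z, \<sigma>, z') \<in> trans R \<and> (x', z') \<in> W'))"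

definition F_op :: "'e set \<Rightarrow> 'e set \<Rightarrow> ('x, 'e) automaton \<Rightarrow> ('z, 'e) automaton
                    \<Rightarrow> ('x \<times> 'z) set set \<Rightarrow> ('x \<times> 'z) set set" where
  "F_op Euc Er G R E = {W. W \<in> E \<and>
     (\<forall>\<sigma>\<in>Euc. \<exists>W'\<in>E. match G R W \<sigma> W') \<and>
     (\<forall>x z \<sigma> z'. (x, z) \<in> W \<longrightarrow> \<sigma> \<in> Er \<longrightarrow> (z, \<sigma>, z') \<in> trans R \<longrightarrow>
        (\<exists>x' W'. (x, \<sigma>, x') \<in> trans G \<and> W' \<in> E \<and> (x', z') \<in> W' \<and> match G R W \<sigma> W'))}"

definition E_up :: "'e set \<Rightarrow> 'e set \<Rightarrow> ('x, 'e) automaton \<Rightarrow> ('z, 'e) automaton \<Rightarrow> ('x \<times> 'z) set set" where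
  "E_up Euc Er G R = gfp (F_op Euc Er G R)"

end

theory Submission
  imports Defs
begin

lemma F_mono: "mono (F_op Euc Er G R)"
  unfolding mono_def F_op_def by blast

lemma E_up_unfold: "W \<in> E_up Euc Er G R \<Longrightarrow> W \<in> F_op Euc Er G R (E_up Euc Er G R)"
  unfolding E_up_def using gfp_unfold[OF F_mono] by blast

lemma E_up_coind: "E \<subseteq> F_op Euc Er G R E \<Longrightarrow> E \<subseteq> E_up Euc Er G R"
  unfolding E_up_def by (rule gfp_upperbound)

lemma match_anti: "match G R W \<sigma> W' \<Longrightarrow> V \<subseteq> W \<Longrightarrow> match G R V \<sigma> W'"
  unfolding match_def by blast

lemma part3:
  "E_up Euc Er G R = (\<Union>W\<in>E_up Euc Er G R. Pow W)"
proof
  show "E_up Euc Er G R \<subseteq> (\<Union>W\<in>E_up Euc Er G R. Pow W)" by blast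
next
  let ?D = "(\<Union>W\<in>E_up Euc Er G R. Pow W)"
  have "?D \<subseteq> F_op Euc Er G R ?D"
  proof
    fix V assume "V \<in> ?D"
    then obtain W where W: "W \<in> E_up Euc Er G R" "V \<subseteq> W" by blast
    have F: "W \<in> F_op Euc Er G R (E_up Euc Er G R)" using E_up_unfold[OF W(1)] .
    show "V \<in> F_op Euc Er G R ?D"
      unfolding F_op_def
    proof (intro CollectI conjI ballI allI impI)
      show "V \<in> ?D" using W by blast
    next
      fix \<sigma> assume "\<sigma> \<in> Euc"
      then obtain W' where "W' \<in> E_up Euc Er G R" "match G R W \<sigma> W'"
        using F unfolding F_op_def by blast
      then have "match G R V \<sigma> W'" "W' \<in> ?D" using match_anti[OF _ W(2)] by auto
      then show "\<exists>W'\<in>?D. match G R V \<sigma> W'" by (rule rev_bexI[rotated])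
    next
      fix x z \<sigma> z' assume a: "(x, z) \<in> V" "\<sigma> \<in> Er" "(z, \<sigma>, z') \<in> trans R"
      then have "(x,z) \<in> W" using W by blast
      then obtain x' W' where "(x, \<sigma>, x') \<in> trans G" "W' \<in> E_up Euc Er G R" "(x', z') \<in> W'"
          "match G R W \<sigma> W'"
        using F a unfolding F_op_def by blast
      then have "(x, \<sigma>, x') \<in> trans G \<and> W' \<in> ?D \<and> (x', z') \<in> W' \<and> match G R V \<sigma> W'"
        using match_anti[OF _ W(2)] by auto
      then show "\<exists>x' W'. (x, \<sigma>, x') \<in> trans G \<and> W' \<in> ?D \<and> (x', z') \<in> W' \<and> match G R V \<sigma> W'"
        by blast
    qed
  qed
  then show "?D \<subseteq> E_up Euc Er G R" by (rule E_up_coind)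
qed

lemma sync_trans: "(((y,x),\<sigma>,(y',x')) \<in> trans (sync S G)) = ((y,\<sigma>,y') \<in> trans S \<and> (x,\<sigma>,x') \<in> trans G)"
  unfolding sync_def by auto

lemma sync_init: "init (sync S G) = init S \<times> init G"
  unfolding sync_def by auto

lemma part1:
  assumes "S \<in> SPR Euc Er G R"
  shows "\<exists>W0\<in>E_up Euc Er G R. \<forall>x0\<in>init G. \<exists>z0\<in>init R. (x0, z0) \<in> W0"
proof -
  from assms have ne: "init S \<noteq> {}" and adm: "admissible Euc S G" and "cc_le Er (sync S G) R"
    unfolding SPR_def by auto
  then obtain \<Phi> where sim: "cc_simulation Er (sync S G) R \<Phi>" unfolding cc_le_def by blast
  note simI = sim[unfolded cc_simulation_def, THEN conjunct1]
  note simF = sim[unfolded cc_simulation_def, THEN conjunct2, THEN conjunct1]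
  note simB = sim[unfolded cc_simulation_def, THEN conjunct2, THEN conjunct2]
  define Wy where "Wy y = {(x,z). reachable (sync S G) (y,x) \<and> ((y,x),z) \<in> \<Phi>}" for y
  define E where "E = range Wy"
  have mt: "match G R (Wy y) \<sigma> (Wy y')" if "(y,\<sigma>,y') \<in> trans S" for y \<sigma> y'
    unfolding match_def
  proof (intro allI impI)
    fix x z x' assume h: "(x, z) \<in> Wy y" "(x, \<sigma>, x') \<in> trans G"
    then have tr: "((y,x),\<sigma>,(y',x')) \<in> trans (sync S G)" using that by (simp add: sync_trans)
    have r: "reachable (sync S G) (y',x')" using h tr unfolding Wy_def
      by (auto intro: reachable.step_reach)
    obtain z' where "(z,\<sigma>,z') \<in> trans R" "((y',x'),z') \<in> \<Phi>" using simF h tr unfolding Wy_def by blast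
    then show "\<exists>z'. (z, \<sigma>, z') \<in> trans R \<and> (x', z') \<in> Wy y'" using r unfolding Wy_def by blast
  qed
  have "E \<subseteq> F_op Euc Er G R E"
  proof
    fix W assume "W \<in> E"
    then obtain y where y: "W = Wy y" unfolding E_def by blast
    show "W \<in> F_op Euc Er G R E" unfolding F_op_def
    proof (intro CollectI conjI ballI allI impI)
      show "W \<in> E" using y E_def by blast
    next
      fix \<sigma> assume s: "\<sigma> \<in> Euc"
      show "\<exists>W'\<in>E. match G R W \<sigma> W'"
      proof (cases "\<exists>y'. (y,\<sigma>,y') \<in> trans S")
        case True
        then obtain y' where "(y,\<sigma>,y') \<in> trans S" by blast
        then show ?thesis using mt y unfolding E_def by blast
      next
        case False
        have "match G R W \<sigma> W" unfolding match_def
        proof (intro allI impI)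
          fix x z x' assume h: "(x, z) \<in> W" "(x, \<sigma>, x') \<in> trans G"
          then have "reachable (sync S G) (y,x)" using y Wy_def by blast
          then obtain p' where "((y,x),\<sigma>,p') \<in> trans (sync S G)"
            using adm s h unfolding admissible_def by blast
          then have "\<exists>y'. (y,\<sigma>,y') \<in> trans S" using sync_trans by (metis prod.collapse)
          then show "\<exists>z'. (z, \<sigma>, z') \<in> trans R \<and> (x', z') \<in> W" using False by blast
        qed
        then show ?thesis using y E_def by blast
      qed
    next
      fix x z \<sigma> z' assume a: "(x, z) \<in> W" "\<sigma> \<in> Er" "(z, \<sigma>, z') \<in> trans R"
      then have r: "reachable (sync S G) (y,x)" and p: "((y,x),z) \<in> \<Phi>" using y Wy_def by auto
      obtain q' where q: "((y,x),\<sigma>,q') \<in> trans (sync S G)" "(q',z') \<in> \<Phi>" using simB p a by blast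
      obtain y' x' where qq: "q' = (y',x')" by (cases q')
      have t: "(y,\<sigma>,y') \<in> trans S" "(x,\<sigma>,x') \<in> trans G" using q qq by (simp_all add: sync_trans)
      have "reachable (sync S G) (y',x')" using r q qq by (auto intro: reachable.step_reach)
      then have "(x',z') \<in> Wy y'" using q qq Wy_def by auto
      then show "\<exists>x' W'. (x, \<sigma>, x') \<in> trans G \<and> W' \<in> E \<and> (x', z') \<in> W' \<and> match G R W \<sigma> W'"
        using t mt y E_def by blast
    qed
  qed
  then have EE: "E \<subseteq> E_up Euc Er G R" by (rule E_up_coind)
  obtain y0 where y0: "y0 \<in> init S" using ne by blast
  have "\<forall>x0\<in>init G. \<exists>z0\<in>init R. (x0, z0) \<in> Wy y0"
  proof
    fix x0 assume x0: "x0 \<in> init G"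
    then have i: "(y0,x0) \<in> init (sync S G)" using y0 sync_init by blast
    then obtain z0 where "z0 \<in> init R" "((y0,x0),z0) \<in> \<Phi>" using simI by blast
    then show "\<exists>z0\<in>init R. (x0, z0) \<in> Wy y0" using i Wy_def by (auto intro: reachable.init_reach)
  qed
  then show ?thesis using EE E_def by blast
qed

lemma part2:
  fixes G :: "('x, 'e) automaton" and R :: "('z, 'e) automaton"
  assumes W0: "W0 \<in> E_up Euc Er G R" and cov: "\<forall>x0\<in>init G. \<exists>z0\<in>init R. (x0, z0) \<in> W0"
  shows "\<exists>S :: (('x \<times> 'z) set, 'e) automaton. S \<in> SPR Euc Er G R"
proof -
  let ?E = "E_up Euc Er G R"
  define S :: "(('x \<times> 'z) set, 'e) automaton" where
    "S = \<lparr>trans = {(W,\<sigma>,W'). W \<in> ?E \<and> W' \<in> ?E \<and> match G R W \<sigma> W'}, init = {W0}\<rparr>"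
  have inv: "W \<in> ?E" if "reachable (sync S G) (W,x)" for W x
    using that
  proof (induction "(W,x)" arbitrary: W x rule: reachable.induct)
    case init_reach then show ?case using W0 by (simp add: sync_init S_def)
  next
    case (step_reach q \<sigma>)
    then show ?case by (cases q) (auto simp: sync_trans S_def)
  qed
  have adm: "admissible Euc S G" unfolding admissible_def
  proof (intro allI impI ballI)
    fix W x \<sigma> assume r: "reachable (sync S G) (W, x)" and s: "\<sigma> \<in> Euc"
      and "\<exists>x'. (x, \<sigma>, x') \<in> trans G"
    then obtain x' where x': "(x, \<sigma>, x') \<in> trans G" by blast
    have "W \<in> F_op Euc Er G R ?E" using E_up_unfold inv[OF r] by blast
    then obtain W' where "W' \<in> ?E" "match G R W \<sigma> W'" using s unfolding F_op_def by blast
    then have "((W,x),\<sigma>,(W',x')) \<in> trans (sync S G)" using x' inv[OF r] by (simp add: sync_trans S_def)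
    then show "\<exists>p'. ((W, x), \<sigma>, p') \<in> trans (sync S G)" by blast
  qed
  define \<Phi> where "\<Phi> = {((W,x),z). W \<in> ?E \<and> (x,z) \<in> W}"
  have "cc_simulation Er (sync S G) R \<Phi>" unfolding cc_simulation_def
  proof (intro conjI ballI allI impI)
    fix q0 assume "q0 \<in> init (sync S G)"
    then obtain x0 where "q0 = (W0,x0)" "x0 \<in> init G" by (auto simp: sync_init S_def)
    then show "\<exists>p0\<in>init R. (q0, p0) \<in> \<Phi>" using cov W0 \<Phi>_def by auto
  next
    fix q p \<sigma> q' assume h: "(q, p) \<in> \<Phi>" "(q, \<sigma>, q') \<in> trans (sync S G)"
    obtain W x where q: "q = (W,x)" by (cases q)
    obtain W' x' where q': "q' = (W',x')" by (cases q')
    have "match G R W \<sigma> W'" "W' \<in> ?E" "(x,\<sigma>,x') \<in> trans G" "(x,p) \<in> W"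
      using h q q' by (auto simp: sync_trans S_def \<Phi>_def)
    then show "\<exists>p'. (p, \<sigma>, p') \<in> trans R \<and> (q', p') \<in> \<Phi>"
      unfolding match_def \<Phi>_def q' by blast
  next
    fix q p \<sigma> p' assume h: "(q, p) \<in> \<Phi>" "\<sigma> \<in> Er" "(p, \<sigma>, p') \<in> trans R"
    obtain W x where q: "q = (W,x)" by (cases q)
    have WE: "W \<in> ?E" "(x,p) \<in> W" using h q \<Phi>_def by auto
    then have "W \<in> F_op Euc Er G R ?E" using E_up_unfold by blast
    then obtain x' W' where "(x, \<sigma>, x') \<in> trans G" "W' \<in> ?E" "(x', p') \<in> W'" "match G R W \<sigma> W'"
      using WE h unfolding F_op_def by blast
    then have "((W,x),\<sigma>,(W',x')) \<in> trans (sync S G)" "((W',x'),p') \<in> \<Phi>"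
      using WE by (auto simp: sync_trans S_def \<Phi>_def)
    then show "\<exists>q'. (q, \<sigma>, q') \<in> trans (sync S G) \<and> (q', p') \<in> \<Phi>" using q by blast
  qed
  then have "S \<in> SPR Euc Er G R" using adm unfolding SPR_def cc_le_def S_def by auto
  then show ?thesis by blast
qed

theorem corollary2:
  fixes G :: "('x, 'e::finite) automaton" and R :: "('z, 'e) automaton"
    and Euc Er :: "'e set"
  assumes "init G \<noteq> {}" and "init R \<noteq> {}"
  shows "((\<exists>S :: ('y, 'e) automaton. S \<in> SPR Euc Er G R) \<longrightarrow>
            (\<exists>W0\<in>E_up Euc Er G R. \<forall>x0\<in>init G. \<exists>z0\<in>init R. (x0, z0) \<in> W0))
       \<and> ((\<exists>W0\<in>E_up Euc Er G R. \<forall>x0\<in>init G. \<exists>z0\<in>init R. (x0, z0) \<in> W0) \<longrightarrow>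
            (\<exists>S :: (('x \<times> 'z) set, 'e) automaton. S \<in> SPR Euc Er G R))
       \<and> ((\<exists>S :: ('y, 'e) automaton. S \<in> SPR Euc Er G R) \<longrightarrow>
            E_up Euc Er G R = (\<Union>W\<in>E_up Euc Er G R. Pow W))"
proof (intro conjI impI)
  assume "\<exists>S :: ('y, 'e) automaton. S \<in> SPR Euc Er G R"
  then obtain S :: "('y, 'e) automaton" where "S \<in> SPR Euc Er G R" by blast
  then show "\<exists>W0\<in>E_up Euc Er G R. \<forall>x0\<in>init G. \<exists>z0\<in>init R. (x0, z0) \<in> W0" by (rule part1)
next
  assume "\<exists>W0\<in>E_up Euc Er G R. \<forall>x0\<in>init G. \<exists>z0\<in>init R. (x0, z0) \<in> W0"
  then obtain W0 where "W0 \<in> E_up Euc Er G R" "\<forall>x0\<in>init G. \<exists>z0\<in>init R. (x0, z0) \<in> W0" by blast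
  then show "\<exists>S :: (('x \<times> 'z) set, 'e) automaton. S \<in> SPR Euc Er G R" by (rule part2)
next
  show "E_up Euc Er G R = (\<Union>W\<in>E_up Euc Er G R. Pow W)" by (rule part3)
qed

end
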